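(* Let $\Psi$ be the set of vectors of $L$ of the form $r_{\lambda,\beta}=\bigl(\lambda;\,1,\ \theta\frac{-3-|\lambda|^2}{6}+\beta\bigr)$ with $\lambda\in\Lambda$ and $\beta\in\frac12\mathbb Z$ satisfying $2\beta+1\equiv|\lambda|^2\pmod 2$ (each such vector lies in $L$ and has norm $-3$). Then the graph of $\Psi$ is connected: any two elements of $\Psi$ are joined by a finite chain of elements of $\Psi$, consecutive elements $a,b$ of which satisfy $|\langle a,b\rangle|=\sqrt3$.
   Context: Let $\omega=e^{2\pi i/3}$, $\mathcal E=\mathbb Z[\omega]$, $\theta=\omega-\bar\omega=\sqrt{-3}$; Hermitian forms are conjugate-linear in the first variable; $|v|^2=\langle v,v\rangle$. Identify $\mathcal E/\theta\mathcal E=\mathbb F_3$. The complex Leech lattice $\Lambda\subset\mathcal E^{12}$ is the set of vectors $(m+\theta c_i+3z_i)_{i=1}^{12}$ with $m\in\{0,1,-1\}$, $c=(c_i)\in\{0,\pm1\}^{12}$ reducing mod $\theta$ to a codeword of the ternary Golay code $\mathcal C_{12}$, $z_i\in\mathcal E$, $\sum_i z_i\equiv m\pmod\theta$; $\mathcal C_{12}\subset\mathbb F_3^{12}$ has generator matrix $[I_6\mid A]$ with rows of $A$: $(0,1,1,1,1,1)$, $(-1,0,1,-1,-1,1)$, $(-1,1,0,1,-1,-1)$, $(-1,-1,1,0,1,-1)$, $(-1,-1,-1,1,0,1)$, $(-1,1,-1,-1,1,0)$. The form on $\Lambda$ is $\langle u,v\rangle=-\frac13\sum\bar u_iv_i$.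 $H=\mathcal E^2$ with form $u^*\begin{pmatrix}0&\bar\theta\\ \theta&0\end{pmatrix}v$, and $L=\Lambda\oplus H$ with elements written $(\lambda;\alpha,\beta)$, $\lambda\in\Lambda$, $(\alpha,\beta)\in H$. *)

theory Defs
  imports Complex_Main
begin

(* omega = e^{2 pi i/3}, theta = omega - conj omega = sqrt(-3) *)
definition omega :: complex where
  "omega = cis (2 * pi / 3)"

definition theta :: complex where
  "theta = omega - cnj omega"

definition eisenstein :: "complex \<Rightarrow> bool" where
  "eisenstein z \<longleftrightarrow> (\<exists>a b :: int. z = of_int a + of_int b * omega)"

definition golayA :: "nat \<Rightarrow> nat \<Rightarrow> int" where
  "golayA j k = [[0,1,1,1,1,1],
                 [-1,0,1,-1,-1,1],
                 [-1,1,0,1,-1,-1],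
                 [-1,-1,1,0,1,-1],
                 [-1,-1,-1,1,0,1],
                 [-1,1,-1,-1,1,0]] ! j ! k"

definition golayG :: "nat \<Rightarrow> nat \<Rightarrow> int" where
  "golayG j i = (if i < 6 then (if i = j then 1 else 0) else golayA j (i - 6))"

definition golay_codeword :: "(nat \<Rightarrow> int) \<Rightarrow> bool" where
  "golay_codeword c \<longleftrightarrow>
     (\<exists>x :: nat \<Rightarrow> int. \<forall>i<12. c i mod 3 = (\<Sum>j<6. x j * golayG j i) mod 3)"

(* vectors of C^12 are represented as functions nat => complex, coordinates 0..11,
   vanishing at indices >= 12 *)
definition leech :: "(nat \<Rightarrow> complex) set" where
  "leech = {v. (\<forall>i\<ge>12. v i = 0) \<and>
     (\<exists>(m::int) (c::nat \<Rightarrow> int) (z::nat \<Rightarrow> complex).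
        m \<in> {0, 1, -1} \<and>
        (\<forall>i<12. c i \<in> {-1, 0, 1}) \<and> golay_codeword c \<and>
        (\<forall>i<12. eisenstein (z i)) \<and>
        (\<exists>w. eisenstein w \<and> (\<Sum>i<12. z i) - of_int m = theta * w) \<and>
        (\<forall>i<12. v i = of_int m + theta * of_int (c i) + 3 * z i))}"

definition leech_form :: "(nat \<Rightarrow> complex) \<Rightarrow> (nat \<Rightarrow> complex) \<Rightarrow> complex" where
  "leech_form u v = - (1/3) * (\<Sum>i<12. cnj (u i) * v i)"

definition leech_norm :: "(nat \<Rightarrow> complex) \<Rightarrow> real" where
  "leech_norm v = Re (leech_form v v)"

(* L = Lambda (+) H, elements (lambda; alpha, beta) *)
type_synonym Lvec = "(nat \<Rightarrow> complex) \<times> complex \<times> complex"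

definition Lset :: "Lvec set" where
  "Lset = {(l, a, b). l \<in> leech \<and> eisenstein a \<and> eisenstein b}"

definition L_form :: "Lvec \<Rightarrow> Lvec \<Rightarrow> complex" where
  "L_form x y = (case x of (l, a, b) \<Rightarrow> case y of (l', a', b') \<Rightarrow>
      leech_form l l' + cnj a * cnj theta * b' + cnj b * theta * a')"

definition r_vec :: "(nat \<Rightarrow> complex) \<Rightarrow> real \<Rightarrow> Lvec" where
  "r_vec l \<beta> = (l, 1, theta * of_real ((-3 - leech_norm l) / 6) + of_real \<beta>)"

definition Psi :: "Lvec set" where
  "Psi = {r_vec l \<beta> | l \<beta>. l \<in> leech \<and>
            (\<exists>n::int. \<beta> = of_int n / 2) \<and>
            (\<exists>k::int. 2 * \<beta> + 1 - leech_norm l = 2 * of_int k)}"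

definition Psi_adj :: "Lvec \<Rightarrow> Lvec \<Rightarrow> bool" where
  "Psi_adj a b \<longleftrightarrow> a \<in> Psi \<and> b \<in> Psi \<and> cmod (L_form a b) = sqrt 3"

end

theory Submission
  imports Defs
begin

lemma omega_alt: "omega = Complex (-1/2) (sqrt 3/2)"
  by (simp add: omega_def cis.ctr cos_120 sin_120)

lemma theta_alt: "theta = Complex 0 (sqrt 3)"
  by (simp add: theta_def omega_alt complex_eq_iff)

lemma theta_omega: "theta = 1 + 2*omega"
  by (simp add: theta_alt omega_alt complex_eq_iff)

lemma omega_sq: "omega * omega = -1 - omega"
  by (simp add: omega_alt complex_eq_iff field_simps)

lemma theta_sq: "theta * theta = -3"
  by (simp add: theta_alt complex_eq_iff)

lemma cnj_theta: "cnj theta = - theta"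
  by (simp add: theta_alt complex_eq_iff)

lemma cnj_omega: "cnj omega = -1 - omega"
  by (simp add: omega_alt complex_eq_iff)

lemma eis_int[simp]: "eisenstein (of_int n)"
  unfolding eisenstein_def by (rule exI[of _ n], rule exI[of _ 0]) simp
lemma eis_0[simp]: "eisenstein 0" using eis_int[of 0] by simp
lemma eis_1[simp]: "eisenstein 1" using eis_int[of 1] by simp
lemma eis_nat[simp]: "eisenstein (of_nat n)" using eis_int[of "int n"] by simp
lemma eis_num[simp]: "eisenstein (numeral n)" using eis_int[of "numeral n"] by simp
lemma eis_omega[simp]: "eisenstein omega"
  unfolding eisenstein_def by (rule exI[of _ 0], rule exI[of _ 1]) simp
lemma eis_add[simp]: "eisenstein x \<Longrightarrow> eisenstein y \<Longrightarrow> eisenstein (x + y)"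
  unfolding eisenstein_def
  by (auto, rule_tac x="a+aa" in exI, rule_tac x="b+ba" in exI, simp add: algebra_simps)
lemma eis_uminus[simp]: "eisenstein x \<Longrightarrow> eisenstein (- x)"
  unfolding eisenstein_def
  by (auto, rule_tac x="-a" in exI, rule_tac x="-b" in exI, simp add: algebra_simps)
lemma eis_diff[simp]: "eisenstein x \<Longrightarrow> eisenstein y \<Longrightarrow> eisenstein (x - y)"
  using eis_add[of x "-y"] by simp
lemma eis_mult[simp]: "eisenstein x \<Longrightarrow> eisenstein y \<Longrightarrow> eisenstein (x * y)"
proof -
  assume "eisenstein x" "eisenstein y"
  then obtain a b c d :: int where x: "x = a + b*omega" and y: "y = c + d*omega"
    unfolding eisenstein_def by blast
  have "x * y = a*c + (a*d+b*c)*omega + b*d*(omega*omega)"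
    unfolding x y by (simp add: algebra_simps)
  also have "\<dots> = of_int (a*c - b*d) + of_int (a*d + b*c - b*d) * omega"
    unfolding omega_sq by (simp add: algebra_simps)
  finally have "x * y = of_int (a*c - b*d) + of_int (a*d + b*c - b*d) * omega" .
  then show ?thesis unfolding eisenstein_def by blast
qed
lemma eis_theta[simp]: "eisenstein theta" by (simp add: theta_omega)
lemma eis_cnj[simp]: "eisenstein x \<Longrightarrow> eisenstein (cnj x)"
proof -
  assume "eisenstein x"
  then obtain a b :: int where x: "x = a + b*omega" unfolding eisenstein_def by blast
  have "cnj x = of_int (a - b) + of_int (-b) * omega"
    unfolding x by (simp add: cnj_omega algebra_simps)
  then show ?thesis unfolding eisenstein_def by blast
qed
lemma eis_sum[simp]: "(\<And>i. i \<in> A \<Longrightarrow> eisenstein (f i)) \<Longrightarrow> eisenstein (sum f A)"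
  by (induction A rule: infinite_finite_induct) auto

lemma golay_gram: "j < 6 \<Longrightarrow> k < 6 \<Longrightarrow> (3::int) dvd (\<Sum>i<12. golayG j i * golayG k i)"
  by (auto simp: golayG_def golayA_def numeral_eq_Suc lessThan_Suc less_Suc_eq)

lemma golay_rowsum: "j < 6 \<Longrightarrow> (3::int) dvd (\<Sum>i<12. golayG j i)"
  by (auto simp: golayG_def golayA_def numeral_eq_Suc lessThan_Suc less_Suc_eq)

lemma golay_rowsq: "j < 6 \<Longrightarrow> (\<Sum>i<12. (golayG j i)^2) = (6::int)"
  by (auto simp: golayG_def golayA_def numeral_eq_Suc lessThan_Suc less_Suc_eq)

lemma golay_XX: "(3::int) dvd (\<Sum>i<12. (\<Sum>j<6. x j * golayG j i) * (\<Sum>k<6. y k * golayG k i))"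
proof -
  have "(\<Sum>i<12. (\<Sum>j<6. x j * golayG j i) * (\<Sum>k<6. y k * golayG k i))
      = (\<Sum>i<12. \<Sum>j<6. \<Sum>k<6. x j * y k * (golayG j i * golayG k i))"
    by (simp add: sum_product algebra_simps)
  also have "\<dots> = (\<Sum>j<6. \<Sum>k<6. x j * y k * (\<Sum>i<12. golayG j i * golayG k i))"
    by (simp add: sum_distrib_left sum.swap[of _ "{..<12::nat}"])
  finally show ?thesis
    by (metis (no_types, lifting) dvd_mult dvd_sum golay_gram lessThan_iff)
qed

lemma golay_dvd: "golay_codeword c \<Longrightarrow> \<exists>x. \<forall>i<12. (3::int) dvd (c i - (\<Sum>j<6. x j * golayG j i))"
  unfolding golay_codeword_def by (metis mod_eq_dvd_iff)

lemma golay_orth: assumes "golay_codeword c" "golay_codeword c'"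
  shows "(3::int) dvd (\<Sum>i<12. c i * c' i)"
proof -
  obtain x where x: "\<forall>i<12. (3::int) dvd (c i - (\<Sum>j<6. x j * golayG j i))"
    using golay_dvd[OF assms(1)] by blast
  obtain y where y: "\<forall>i<12. (3::int) dvd (c' i - (\<Sum>j<6. y j * golayG j i))"
    using golay_dvd[OF assms(2)] by blast
  define X where "X i = (\<Sum>j<6. x j * golayG j i)" for i
  define Y where "Y i = (\<Sum>j<6. y j * golayG j i)" for i
  have "(3::int) dvd (\<Sum>i<12. c i * c' i - X i * Y i)"
  proof (rule dvd_sum)
    fix i assume "i \<in> {..<12::nat}"
    then have "3 dvd (c i - X i)" "3 dvd (c' i - Y i)" using x y unfolding X_def Y_def by auto
    moreover have "c i * c' i - X i * Y i = (c i - X i) * c' i + X i * (c' i - Y i)"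
      by (simp add: algebra_simps)
    ultimately show "3 dvd (c i * c' i - X i * Y i)" by (metis dvd_add dvd_mult dvd_mult2)
  qed
  moreover have "(3::int) dvd (\<Sum>i<12. X i * Y i)" unfolding X_def Y_def by (rule golay_XX)
  ultimately have "3 dvd ((\<Sum>i<12. c i * c' i - X i * Y i) + (\<Sum>i<12. X i * Y i))" 
    by (rule dvd_add)
  moreover have "(\<Sum>i<12. c i * c' i - X i * Y i) + (\<Sum>i<12. X i * Y i) = (\<Sum>i<12. c i * c' i)"
    by (simp add: sum_subtractf)
  ultimately show ?thesis by simp
qed

lemma golay_sum: assumes "golay_codeword c" shows "(3::int) dvd (\<Sum>i<12. c i)"
proof -
  obtain x where x: "\<forall>i<12. (3::int) dvd (c i - (\<Sum>j<6. x j * golayG j i))"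
    using golay_dvd[OF assms(1)] by blast
  have a: "(3::int) dvd (\<Sum>i<12. c i - (\<Sum>j<6. x j * golayG j i))"
    by (rule dvd_sum) (use x in blast)
  have e: "(\<Sum>i<12. (\<Sum>j<6. x j * golayG j i)) = (\<Sum>j<6. x j * (\<Sum>i<12. golayG j i))"
    unfolding sum_distrib_left by (rule sum.swap)
  have "(3::int) dvd (\<Sum>j<6. x j * (\<Sum>i<12. golayG j i))"
    by (rule dvd_sum, rule dvd_mult, rule golay_rowsum) simp
  then have b: "(3::int) dvd (\<Sum>i<12. (\<Sum>j<6. x j * golayG j i))" by (simp only: e)
  have "(\<Sum>i<12. c i) = (\<Sum>i<12. c i - (\<Sum>j<6. x j * golayG j i)) + (\<Sum>i<12. (\<Sum>j<6. x j * golayG j i))"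
    by (simp add: sum_subtractf)
  moreover have "3 dvd ((\<Sum>i<12. c i - (\<Sum>j<6. x j * golayG j i)) + (\<Sum>i<12. (\<Sum>j<6. x j * golayG j i)))"
    by (rule dvd_add[OF a b])
  ultimately show ?thesis by (simp only:)
qed

definition lrep :: "(nat \<Rightarrow> complex) \<Rightarrow> int \<Rightarrow> (nat \<Rightarrow> int) \<Rightarrow> (nat \<Rightarrow> complex) \<Rightarrow> complex \<Rightarrow> bool" where
  "lrep l m c z w \<longleftrightarrow> golay_codeword c \<and> (\<forall>i<12. eisenstein (z i)) \<and> eisenstein w \<and>
     (\<Sum>i<12. z i) - of_int m = theta * w \<and> (\<forall>i<12. l i = of_int m + theta * of_int (c i) + 3 * z i)
     \<and> (\<forall>i\<ge>12. l i = 0)"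

lemma leech_lrep: "l \<in> leech \<Longrightarrow> \<exists>m c z w. lrep l m c z w"
  unfolding leech_def lrep_def by blast

lemma golay_cong: "golay_codeword c \<Longrightarrow> (\<And>i. i < 12 \<Longrightarrow> c' i mod 3 = c i mod 3) \<Longrightarrow> golay_codeword c'"
  unfolding golay_codeword_def by auto

lemma lrep_leech: assumes "lrep l m c z w" shows "l \<in> leech"
proof -
  from assms have cw: "golay_codeword c" and zE: "\<forall>i<12. eisenstein (z i)" and wE: "eisenstein w"
    and S: "(\<Sum>i<12. z i) - of_int m = theta * w" and L: "\<forall>i<12. l i = of_int m + theta * of_int (c i) + 3 * z i"
    and Z: "\<forall>i\<ge>12. l i = 0" unfolding lrep_def by auto
  define m0 where "m0 = (m + 1) mod 3 - 1"
  define k where "k = (m - m0) div 3"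
  have mk: "m = m0 + 3 * k" unfolding k_def m0_def by presburger
  have m0r: "m0 \<in> {0, 1, -1}" unfolding m0_def by simp presburger
  define c0 where "c0 i = (c i + 1) mod 3 - 1" for i
  define e where "e i = (c i - c0 i) div 3" for i
  have ce: "c i = c0 i + 3 * e i" for i unfolding e_def c0_def by presburger
  have c0r: "c0 i \<in> {-1, 0, 1}" for i unfolding c0_def by simp presburger
  have c0m: "c0 i mod 3 = c i mod 3" for i unfolding c0_def by presburger
  define z0 where "z0 i = z i + of_int k + theta * of_int (e i)" for i
  define w0 where "w0 = w + of_int (\<Sum>i<12. e i) - 5 * theta * of_int k"
  have "(\<Sum>i<12. z0 i) = (\<Sum>i<12. z i) + 12 * of_int k + theta * of_int (\<Sum>i<12. e i)"
    unfolding z0_def by (simp add: sum.distrib sum_distrib_left)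
  also have "\<dots> = of_int m + theta * w + 12 * of_int k + theta * of_int (\<Sum>i<12. e i)"
    using S by (simp add: algebra_simps)
  finally have "(\<Sum>i<12. z0 i) - of_int m0 = theta * w + 15 * of_int k + theta * of_int (\<Sum>i<12. e i)"
    using mk by simp
  also have "\<dots> = theta * w0"
  proof -
    have "theta * w0 = theta * w + theta * of_int (\<Sum>i<12. e i) - 5 * (theta * theta) * of_int k"
      unfolding w0_def by (simp add: algebra_simps)
    then show ?thesis unfolding theta_sq by simp
  qed
  finally have S0: "(\<Sum>i<12. z0 i) - of_int m0 = theta * w0" .
  have L0: "l i = of_int m0 + theta * of_int (c0 i) + 3 * z0 i" if "i < 12" for i
    using L that unfolding z0_def mk ce by (simp add: algebra_simps)
  show ?thesis unfolding leech_def
    apply (simp, intro conjI)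
     apply (use Z in blast)
    apply (rule exI[of _ m0], rule conjI, use m0r in simp)
    apply (rule exI[of _ c0], intro conjI)
      apply (use c0r in blast)
     apply (rule golay_cong[OF cw], rule c0m)
    apply (rule exI[of _ z0], intro conjI)
      apply (simp add: z0_def zE)
     apply (rule exI[of _ w0], simp add: w0_def wE S0)
    apply (simp add: L0)
    done
qed

lemma leech_add: assumes "l \<in> leech" "l' \<in> leech" shows "(\<lambda>i. l i + l' i) \<in> leech"
proof -
  obtain m c z w where a: "lrep l m c z w" using leech_lrep[OF assms(1)] by blast
  obtain m' c' z' w' where b: "lrep l' m' c' z' w'" using leech_lrep[OF assms(2)] by blast
  obtain x where x: "\<forall>i<12. c i mod 3 = (\<Sum>j<6. x j * golayG j i) mod 3"
    using a unfolding lrep_def golay_codeword_def by blast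
  obtain x' where x': "\<forall>i<12. c' i mod 3 = (\<Sum>j<6. x' j * golayG j i) mod 3"
    using b unfolding lrep_def golay_codeword_def by blast
  have cw: "golay_codeword (\<lambda>i. c i + c' i)"
    unfolding golay_codeword_def
  proof (rule exI[of _ "\<lambda>j. x j + x' j"], intro allI impI)
    fix i :: nat assume i: "i < 12"
    have "(c i + c' i) mod 3 = ((\<Sum>j<6. x j * golayG j i) + (\<Sum>j<6. x' j * golayG j i)) mod 3"
      by (rule mod_add_cong) (use x i x' in blast)+
    also have "(\<Sum>j<6. x j * golayG j i) + (\<Sum>j<6. x' j * golayG j i) = (\<Sum>j<6. (x j + x' j) * golayG j i)"
      by (simp add: sum.distrib distrib_right)
    finally show "(c i + c' i) mod 3 = (\<Sum>j<6. (x j + x' j) * golayG j i) mod 3" .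
  qed
  have "lrep (\<lambda>i. l i + l' i) (m + m') (\<lambda>i. c i + c' i) (\<lambda>i. z i + z' i) (w + w')"
    unfolding lrep_def
  proof (intro conjI cw)
    show "\<forall>i<12. eisenstein (z i + z' i)" using a b unfolding lrep_def by simp
    show "eisenstein (w + w')" using a b unfolding lrep_def by simp
    show "(\<Sum>i<12. z i + z' i) - of_int (m + m') = theta * (w + w')"
      using a b unfolding lrep_def by (simp add: sum.distrib algebra_simps)
    show "\<forall>i<12. l i + l' i = of_int (m + m') + theta * of_int (c i + c' i) + 3 * (z i + z' i)"
      using a b unfolding lrep_def by (simp add: algebra_simps)
    show "\<forall>i\<ge>12. l i + l' i = 0" using a b unfolding lrep_def by simp
  qed
  then show ?thesis by (rule lrep_leech)
qed

lemma leech_neg: assumes "l \<in> leech" shows "(\<lambda>i. - l i) \<in> leech"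
proof -
  obtain m c z w where a: "lrep l m c z w" using leech_lrep[OF assms(1)] by blast
  obtain x where x: "\<forall>i<12. c i mod 3 = (\<Sum>j<6. x j * golayG j i) mod 3"
    using a unfolding lrep_def golay_codeword_def by blast
  have cw: "golay_codeword (\<lambda>i. - c i)"
    unfolding golay_codeword_def
  proof (rule exI[of _ "\<lambda>j. - x j"], intro allI impI)
    fix i :: nat assume i: "i < 12"
    have "(- c i) mod 3 = (- (\<Sum>j<6. x j * golayG j i)) mod 3"
      by (rule mod_minus_cong) (use x i in blast)
    also have "- (\<Sum>j<6. x j * golayG j i) = (\<Sum>j<6. (- x j) * golayG j i)"
      by (simp add: sum_negf)
    finally show "(- c i) mod 3 = (\<Sum>j<6. (- x j) * golayG j i) mod 3" .
  qed
  have "lrep (\<lambda>i. - l i) (- m) (\<lambda>i. - c i) (\<lambda>i. - z i) (- w)"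
    unfolding lrep_def
  proof (intro conjI cw)
    show "\<forall>i<12. eisenstein (- z i)" using a unfolding lrep_def by simp
    show "eisenstein (- w)" using a unfolding lrep_def by simp
    show "(\<Sum>i<12. - z i) - of_int (- m) = theta * (- w)"
      using a unfolding lrep_def by (simp add: sum_negf algebra_simps)
    show "\<forall>i<12. - l i = of_int (- m) + theta * of_int (- c i) + 3 * (- z i)"
      using a unfolding lrep_def by (simp add: algebra_simps)
    show "\<forall>i\<ge>12. - l i = 0" using a unfolding lrep_def by simp
  qed
  then show ?thesis by (rule lrep_leech)
qed

lemma theta_sq2: "theta * (theta * x) = -3 * x"
  by (simp add: mult.assoc[symmetric] theta_sq)

lemma sum_cnj_leech: assumes "lrep l m c z w" "lrep l' m' c' z' w'"
  shows "\<exists>e. eisenstein e \<and> (\<Sum>i<12. cnj (l i) * l' i) = 3 * theta * e"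
proof -
  from assms have cw: "golay_codeword c" and zE: "\<forall>i<12. eisenstein (z i)" and wE: "eisenstein w"
    and S: "(\<Sum>i<12. z i) - of_int m = theta * w" and L: "\<forall>i<12. l i = of_int m + theta * of_int (c i) + 3 * z i"
    unfolding lrep_def by auto
  from assms have cw': "golay_codeword c'" and zE': "\<forall>i<12. eisenstein (z' i)" and wE': "eisenstein w'"
    and S': "(\<Sum>i<12. z' i) - of_int m' = theta * w'" and L': "\<forall>i<12. l' i = of_int m' + theta * of_int (c' i) + 3 * z' i"
    unfolding lrep_def by auto
  obtain p where p: "(\<Sum>i<12. c i) = 3 * p" using golay_sum[OF cw] by blast
  obtain p' where p': "(\<Sum>i<12. c' i) = 3 * p'" using golay_sum[OF cw'] by blast
  obtain q where q: "(\<Sum>i<12. c i * c' i) = 3 * q" using golay_orth[OF cw cw'] by blast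
  define g where "g i = - of_int (c i) * z' i + cnj (z i) * of_int (c' i) - theta * cnj (z i) * z' i" for i
  have pt: "cnj (l i) * l' i = of_int (m * m') + theta * of_int (m * c' i - m' * c i) + 3 * of_int m * z' i
      + 3 * of_int m' * cnj (z i) + 3 * of_int (c i * c' i) + 3 * theta * g i" if i: "i < 12" for i
  proof -
    have lc: "cnj (l i) = of_int m - theta * of_int (c i) + 3 * cnj (z i)"
      using L i by (simp add: cnj_theta)
    have li: "l' i = of_int m' + theta * of_int (c' i) + 3 * z' i" using L' i by simp
    show ?thesis unfolding lc li g_def by (simp add: algebra_simps theta_sq theta_sq2)
  qed
  have "(\<Sum>i<12. cnj (l i) * l' i) = (\<Sum>i<12. of_int (m * m') + theta * of_int (m * c' i - m' * c i) + 3 * of_int m * z' i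
      + 3 * of_int m' * cnj (z i) + 3 * of_int (c i * c' i) + 3 * theta * g i)"
    by (rule sum.cong) (simp_all add: pt)
  also have "\<dots> = 12 * of_int (m * m') + theta * (of_int m * of_int (\<Sum>i<12. c' i) - of_int m' * of_int (\<Sum>i<12. c i))
      + 3 * of_int m * (\<Sum>i<12. z' i) + 3 * of_int m' * cnj (\<Sum>i<12. z i) + 3 * of_int (\<Sum>i<12. c i * c' i)
      + 3 * theta * (\<Sum>i<12. g i)"
    by (simp add: sum.distrib sum_distrib_left sum_subtractf algebra_simps)
  also have "\<dots> = 3 * theta * (- 2 * theta * of_int (m * m') + of_int (m * p' - m' * p) - theta * of_int q
      + of_int m * w' - of_int m' * cnj w + (\<Sum>i<12. g i))"
  proof -
    have z1: "(\<Sum>i<12. z' i) = of_int m' + theta * w'" using S' by (simp add: algebra_simps)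
    have z2: "cnj (\<Sum>i<12. z i) = of_int m - theta * cnj w"
      using arg_cong[OF S, of cnj] by (simp add: cnj_theta algebra_simps)
    show ?thesis unfolding z1 z2 p p' q by (simp add: algebra_simps theta_sq theta_sq2)
  qed
  finally have eq: "(\<Sum>i<12. cnj (l i) * l' i) = 3 * theta * (- 2 * theta * of_int (m * m') + of_int (m * p' - m' * p) - theta * of_int q
      + of_int m * w' - of_int m' * cnj w + (\<Sum>i<12. g i))" .
  have "eisenstein (- 2 * theta * of_int (m * m') + of_int (m * p' - m' * p) - theta * of_int q
      + of_int m * w' - of_int m' * cnj w + (\<Sum>i<12. g i))"
  proof -
    have "eisenstein (\<Sum>i<12. g i)" by (rule eis_sum) (simp add: g_def zE zE')
    then show ?thesis by (simp add: wE wE')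
  qed
  with eq show ?thesis by blast
qed

lemma form_theta: assumes "l \<in> leech" "l' \<in> leech"
  shows "\<exists>a b :: int. Re (leech_form l l') = - 3 * of_int b / 2 \<and> Im (leech_form l l') = sqrt 3 * (of_int a - of_int b / 2)"
proof -
  obtain m c z w where a: "lrep l m c z w" using leech_lrep[OF assms(1)] by blast
  obtain m' c' z' w' where b: "lrep l' m' c' z' w'" using leech_lrep[OF assms(2)] by blast
  obtain e where e: "eisenstein e" "(\<Sum>i<12. cnj (l i) * l' i) = 3 * theta * e"
    using sum_cnj_leech[OF a b] by blast
  obtain x y :: int where xy: "- e = x + y * omega" using eis_uminus[OF e(1)] unfolding eisenstein_def by blast
  have "leech_form l l' = theta * (x + y * omega)"
    unfolding leech_form_def e(2) xy[symmetric] by simp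
  then show ?thesis
    by (intro exI[of _ x] exI[of _ y]) (simp add: theta_alt omega_alt algebra_simps)
qed

lemma form_self: "leech_form v v = of_real (leech_norm v)"
proof -
  have "Im (leech_form v v) = 0"
    unfolding leech_form_def by (simp add: Im_sum)
  then show ?thesis unfolding leech_norm_def by (simp add: complex_eq_iff)
qed

lemma norm_3: assumes "l \<in> leech" shows "\<exists>a::int. leech_norm l = 3 * a"
proof -
  obtain a b :: int where ab: "Re (leech_form l l) = - 3 * of_int b / 2" "Im (leech_form l l) = sqrt 3 * (of_int a - of_int b / 2)"
    using form_theta[OF assms assms] by blast
  have "Im (leech_form l l) = 0" using form_self[of l] by simp
  then have "b = 2 * a" using ab(2) by simp
  then show ?thesis using ab(1) unfolding leech_norm_def by (intro exI[of _ "-a"]) simp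
qed

lemma form_add_right: "leech_form l (\<lambda>i. l' i + l'' i) = leech_form l l' + leech_form l l''"
  unfolding leech_form_def by (simp add: sum.distrib algebra_simps)
lemma form_add_left: "leech_form (\<lambda>i. l' i + l'' i) l = leech_form l' l + leech_form l'' l"
  unfolding leech_form_def by (simp add: sum.distrib algebra_simps)
lemma form_neg_right: "leech_form l (\<lambda>i. - l' i) = - leech_form l l'"
  unfolding leech_form_def by (simp add: sum_negf)
lemma form_neg_left: "leech_form (\<lambda>i. - l' i) l = - leech_form l' l"
  unfolding leech_form_def by (simp add: sum_negf)
lemma form_cnj: "leech_form l' l = cnj (leech_form l l')"
  unfolding leech_form_def by (simp add: mult.commute)
lemma norm_neg: "leech_norm (\<lambda>i. - l i) = leech_norm l"
  unfolding leech_norm_def by (simp add: form_neg_left form_neg_right)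
lemma norm_add: "leech_norm (\<lambda>i. l i + s i) = leech_norm l + leech_norm s + 2 * Re (leech_form l s)"
  unfolding leech_norm_def form_add_left form_add_right
  by (simp add: form_cnj[of s l])

definition valid :: "(nat \<Rightarrow> complex) \<Rightarrow> real \<Rightarrow> bool" where
  "valid l \<beta> \<longleftrightarrow> l \<in> leech \<and> (\<exists>n::int. \<beta> = of_int n / 2) \<and>
            (\<exists>k::int. 2 * \<beta> + 1 - leech_norm l = 2 * of_int k)"

lemma valid_Psi: "valid l \<beta> \<Longrightarrow> r_vec l \<beta> \<in> Psi"
  unfolding valid_def Psi_def by blast

lemma Psi_valid: "x \<in> Psi \<Longrightarrow> \<exists>l \<beta>. x = r_vec l \<beta> \<and> valid l \<beta>"
  unfolding valid_def Psi_def by blast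

lemma Lform_r: "L_form (r_vec l \<beta>) (r_vec l' \<gamma>) = leech_form l l'
   + of_real (-3 - (leech_norm l + leech_norm l') / 2) + theta * of_real (\<beta> - \<gamma>)"
proof -
  have "L_form (r_vec l \<beta>) (r_vec l' \<gamma>) = leech_form l l' + (- theta) * (theta * of_real ((-3 - leech_norm l') / 6) + of_real \<gamma>)
     + (- theta * of_real ((-3 - leech_norm l) / 6) + of_real \<beta>) * theta"
    unfolding L_form_def r_vec_def by (simp add: cnj_theta)
  also have "\<dots> = leech_form l l' + 3 * of_real ((-3 - leech_norm l') / 6) + 3 * of_real ((-3 - leech_norm l) / 6) + theta * of_real (\<beta> - \<gamma>)"
    by (simp add: algebra_simps theta_sq theta_sq2)
  also have "\<dots> = leech_form l l' + of_real (-3 - (leech_norm l + leech_norm l') / 2) + theta * of_real (\<beta> - \<gamma>)"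
    by (simp add: field_simps)
  finally show ?thesis .
qed

lemma part1: assumes "valid l \<beta>" shows "r_vec l \<beta> \<in> Lset \<and> L_form (r_vec l \<beta>) (r_vec l \<beta>) = -3"
proof
  from assms obtain n k :: int where l: "l \<in> leech" and n: "\<beta> = of_int n / 2" and k: "2 * \<beta> + 1 - leech_norm l = 2 * of_int k"
    unfolding valid_def by blast
  obtain a :: int where a: "leech_norm l = 3 * of_int a" using norm_3[OF l] by blast
  have "theta * of_real ((-3 - leech_norm l) / 6) + of_real \<beta> = of_int (k - 1 + a) + of_int (-(1 + a)) * omega"
  proof -
    have "\<beta> = k - 1/2 + 3 * a / 2" using k a by simp
    then show ?thesis unfolding a by (simp add: theta_alt omega_alt complex_eq_iff field_simps)
  qed
  moreover have "eisenstein (of_int (k - 1 + a) + of_int (-(1 + a)) * omega)"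
    unfolding eisenstein_def by blast
  ultimately show "r_vec l \<beta> \<in> Lset" unfolding Lset_def r_vec_def using l by simp
  show "L_form (r_vec l \<beta>) (r_vec l \<beta>) = -3" unfolding Lform_r form_self
    by (simp add: complex_eq_iff)
qed

lemma s3: "sqrt 3 * (sqrt 3 * x) = 3 * x"
  by (simp add: mult.assoc[symmetric])

lemma edge:
  assumes l: "l \<in> leech" and s: "s \<in> leech" and v: "valid l \<beta>" and e: "\<epsilon> = 1 \<or> \<epsilon> = -1"
    and d: "(leech_norm s = -6 \<and> \<delta> = 1) \<or> (leech_norm s = -9 \<and> \<delta> = 1/2)"
  shows "valid (\<lambda>i. l i + s i) (\<beta> + Im (leech_form l s) / sqrt 3 - \<epsilon> * \<delta>) \<and>
         Psi_adj (r_vec l \<beta>) (r_vec (\<lambda>i. l i + s i) (\<beta> + Im (leech_form l s) / sqrt 3 - \<epsilon> * \<delta>))"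
proof -
  define \<gamma> where "\<gamma> = \<beta> + Im (leech_form l s) / sqrt 3 - \<epsilon> * \<delta>"
  obtain a b :: int where ab: "Re (leech_form l s) = - 3 * of_int b / 2" "Im (leech_form l s) = sqrt 3 * (of_int a - of_int b / 2)"
    using form_theta[OF l s] by blast
  obtain dd j :: int where dj: "\<epsilon> * \<delta> = of_int dd / 2" "of_int dd + leech_norm s = 2 * of_int j"
  proof -
    consider "\<epsilon> = 1" "leech_norm s = -6" "\<delta> = 1" | "\<epsilon> = -1" "leech_norm s = -6" "\<delta> = 1"
      | "\<epsilon> = 1" "leech_norm s = -9" "\<delta> = 1/2" | "\<epsilon> = -1" "leech_norm s = -9" "\<delta> = 1/2"
      using e d by blast
    then show ?thesis
    proof cases
      case 1 then show ?thesis using that[of 2 "-2"] by simp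
    next
      case 2 then show ?thesis using that[of "-2" "-4"] by simp
    next
      case 3 then show ?thesis using that[of 1 "-4"] by simp
    next
      case 4 then show ?thesis using that[of "-1" "-5"] by simp
    qed
  qed
  from v obtain n k :: int where n: "\<beta> = of_int n / 2" and k: "2 * \<beta> + 1 - leech_norm l = 2 * of_int k"
    unfolding valid_def by blast
  have g: "\<gamma> = \<beta> + (of_int a - of_int b / 2) - of_int dd / 2"
    unfolding \<gamma>_def ab(2) dj(1) by simp
  have ls: "(\<lambda>i. l i + s i) \<in> leech" by (rule leech_add[OF l s])
  have N: "leech_norm (\<lambda>i. l i + s i) = leech_norm l + leech_norm s - 3 * of_int b"
    unfolding norm_add ab(1) by simp
  have val: "valid (\<lambda>i. l i + s i) \<gamma>"
    unfolding valid_def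
  proof (intro conjI ls)
    show "\<exists>n::int. \<gamma> = of_int n / 2"
      by (rule exI[of _ "n + 2 * a - b - dd"]) (simp add: g n field_simps)
    show "\<exists>k::int. 2 * \<gamma> + 1 - leech_norm (\<lambda>i. l i + s i) = 2 * of_int k"
      by (rule exI[of _ "k + a + b - j"]) (use k dj(2) in \<open>simp add: g N field_simps\<close>)
  qed
  have V: "L_form (r_vec l \<beta>) (r_vec (\<lambda>i. l i + s i) \<gamma>) = Complex (-3 - leech_norm s / 2) (sqrt 3 * (\<epsilon> * \<delta>))"
  proof -
    have F: "leech_form l (\<lambda>i. l i + s i) = of_real (leech_norm l) + leech_form l s"
      unfolding form_add_right form_self ..
    show ?thesis unfolding Lform_r F
      by (simp add: complex_eq_iff N ab theta_alt \<gamma>_def field_simps s3)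
  qed
  have "cmod (L_form (r_vec l \<beta>) (r_vec (\<lambda>i. l i + s i) \<gamma>)) = sqrt 3"
  proof -
    have q: "(sqrt 3 * (\<epsilon> * \<delta>))^2 = 3 * (\<epsilon> * \<delta>)^2" by (simp add: power_mult_distrib)
    have e2: "\<epsilon>^2 = 1" using e by auto
    have r: "(-3 - leech_norm s / 2)^2 + (sqrt 3 * (\<epsilon> * \<delta>))^2 = 3"
      using d
    proof
      assume h: "leech_norm s = -6 \<and> \<delta> = 1"
      then have h1: "leech_norm s = -6" and h2: "\<delta> = 1" by auto
      show ?thesis unfolding q h1 h2 power_mult_distrib e2 by simp
    next
      assume h: "leech_norm s = -9 \<and> \<delta> = 1/2"
      then have h1: "leech_norm s = -9" and h2: "\<delta> = 1/2" by auto
      show ?thesis unfolding q h1 h2 power_mult_distrib e2 by (simp add: power2_eq_square)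
    qed
    show ?thesis unfolding V norm_complex_def using r by simp
  qed
  then show ?thesis unfolding \<gamma>_def[symmetric] Psi_adj_def
    using val valid_Psi v by blast
qed

lemma Psi_adj_sym: "Psi_adj x y \<Longrightarrow> Psi_adj y x"
proof -
  have "L_form y x = cnj (L_form x y)"
    unfolding L_form_def by (cases x, cases y) (auto intro: form_cnj)
  then show "Psi_adj x y \<Longrightarrow> Psi_adj y x" unfolding Psi_adj_def by simp
qed

definition step :: "(nat \<Rightarrow> complex) \<Rightarrow> bool" where
  "step g \<longleftrightarrow> g \<in> leech \<and> (leech_norm g = -6 \<or> leech_norm g = -9)"

definition base :: Lvec where "base = r_vec (\<lambda>i. 0) (1/2)"

definition good :: "(nat \<Rightarrow> complex) \<Rightarrow> bool" where
  "good l \<longleftrightarrow> l \<in> leech \<and> (\<forall>\<beta>. valid l \<beta> \<longrightarrow> Psi_adj\<^sup>*\<^sup>* base (r_vec l \<beta>))"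

lemma R_sym: "Psi_adj\<^sup>*\<^sup>* x y \<Longrightarrow> Psi_adj\<^sup>*\<^sup>* y x"
proof -
  have "symp Psi_adj" by (rule sympI) (rule Psi_adj_sym)
  then have "symp Psi_adj\<^sup>*\<^sup>*" by (rule symp_rtranclp)
  then show "Psi_adj\<^sup>*\<^sup>* x y \<Longrightarrow> Psi_adj\<^sup>*\<^sup>* y x" by (rule sympD)
qed

lemma edge1: assumes "l \<in> leech" "step s" "valid l \<beta>"
  shows "\<exists>\<gamma>. valid (\<lambda>i. l i + s i) \<gamma> \<and> Psi_adj (r_vec l \<beta>) (r_vec (\<lambda>i. l i + s i) \<gamma>)"
proof -
  from assms(2) have s: "s \<in> leech" and d: "(leech_norm s = -6 \<and> (1::real) = 1) \<or> (leech_norm s = -9 \<and> (1/2::real) = 1/2)"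
    unfolding step_def by auto
  show ?thesis
  proof (cases "leech_norm s = -6")
    case True
    then show ?thesis using edge[OF assms(1) s assms(3), of 1 1] by blast
  next
    case False
    then have "leech_norm s = -9" using assms(2) unfolding step_def by auto
    then show ?thesis using edge[OF assms(1) s assms(3), of 1 "1/2"] by blast
  qed
qed

lemma step_neg: "step g \<Longrightarrow> step (\<lambda>i. - g i)"
  unfolding step_def using leech_neg norm_neg by auto

lemma good_step: assumes "good l" "step g" shows "good (\<lambda>i. l i + g i)"
proof -
  have l: "l \<in> leech" and g: "g \<in> leech" using assms unfolding good_def step_def by auto
  have lg: "(\<lambda>i. l i + g i) \<in> leech" by (rule leech_add[OF l g])
  show ?thesis unfolding good_def
  proof (intro conjI lg allI impI)
    fix \<beta> assume v: "valid (\<lambda>i. l i + g i) \<beta>"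
    obtain \<gamma> where v2: "valid (\<lambda>i. (l i + g i) + - g i) \<gamma>"
      and e: "Psi_adj (r_vec (\<lambda>i. l i + g i) \<beta>) (r_vec (\<lambda>i. (l i + g i) + - g i) \<gamma>)"
      using edge1[OF lg step_neg[OF assms(2)] v] by blast
    have eq: "(\<lambda>i. (l i + g i) + - g i) = l" by simp
    have "Psi_adj\<^sup>*\<^sup>* base (r_vec l \<gamma>)" using assms(1) v2 unfolding good_def eq by blast
    moreover have "Psi_adj (r_vec l \<gamma>) (r_vec (\<lambda>i. l i + g i) \<beta>)" using Psi_adj_sym e unfolding eq by blast
    ultimately show "Psi_adj\<^sup>*\<^sup>* base (r_vec (\<lambda>i. l i + g i) \<beta>)" by (rule rtranclp.rtrancl_into_rtrancl)
  qed
qed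

lemma good_multnat: assumes "good l" "step g" shows "good (\<lambda>i. l i + of_nat n * g i)"
proof (induction n)
  case 0 then show ?case using assms(1) by simp
next
  case (Suc n)
  have "good (\<lambda>i. (l i + of_nat n * g i) + g i)" using good_step[OF Suc assms(2)] by simp
  moreover have "(\<lambda>i. (l i + of_nat n * g i) + g i) = (\<lambda>i. l i + of_nat (Suc n) * g i)"
    by (simp add: algebra_simps)
  ultimately show ?case by simp
qed

lemma good_mult: assumes "good l" "step g" shows "good (\<lambda>i. l i + of_int n * g i)"
proof (cases "n \<ge> 0")
  case True
  then obtain k where "n = int k" using nonneg_int_cases by blast
  then show ?thesis using good_multnat[OF assms, of k] by simp
next
  case False
  then have "0 \<le> - n" by simp
  then obtain k where "- n = int k" using nonneg_int_cases by blast
  then have k: "n = - int k" by simp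
  have "good (\<lambda>i. l i + of_nat k * - g i)" by (rule good_multnat[OF assms(1) step_neg[OF assms(2)]])
  then show ?thesis unfolding k by simp
qed

lemma good_sum: assumes "finite K" "good l" "\<forall>k\<in>K. step (g k)"
  shows "good (\<lambda>i. l i + (\<Sum>k\<in>K. of_int (n k) * g k i))"
  using assms
proof (induction K rule: finite_induct)
  case empty then show ?case by simp
next
  case (insert k K)
  have "good (\<lambda>i. (l i + (\<Sum>k\<in>K. of_int (n k) * g k i)) + of_int (n k) * g k i)"
    using good_mult insert by simp
  moreover have "(\<lambda>i. (l i + (\<Sum>k\<in>K. of_int (n k) * g k i)) + of_int (n k) * g k i)
     = (\<lambda>i. l i + (\<Sum>k\<in>insert k K. of_int (n k) * g k i))"
    using insert by (simp add: algebra_simps)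
  ultimately show ?case by simp
qed

lemma cnj_omega_omega: "cnj omega * omega = 1"
  by (simp add: omega_alt complex_eq_iff power2_eq_square)

lemma norm_omega: "leech_norm (\<lambda>i. omega * g i) = leech_norm g"
proof -
  have pt: "cnj (omega * g i) * (omega * g i) = cnj (g i) * g i" for i
  proof -
    have "cnj (omega * g i) * (omega * g i) = (cnj omega * omega) * (cnj (g i) * g i)"
      by (simp add: algebra_simps)
    then show ?thesis unfolding cnj_omega_omega by simp
  qed
  show ?thesis unfolding leech_norm_def leech_form_def pt ..
qed

lemma golay_zero: "golay_codeword (\<lambda>i. 0)"
  unfolding golay_codeword_def by (rule exI[of _ "\<lambda>j. 0"]) simp

lemma golay_row: "j < 6 \<Longrightarrow> golay_codeword (\<lambda>i. golayG j i)"
  unfolding golay_codeword_def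
proof (rule exI[of _ "\<lambda>j'. if j' = j then 1 else 0"], intro allI impI)
  fix i :: nat assume "j < 6"
  then show "golayG j i mod 3 = (\<Sum>j'<6. (if j' = j then 1 else 0) * golayG j' i) mod 3"
    by (simp add: if_distrib[of "\<lambda>x. x * _"] cong: if_cong)
qed

definition vu :: "nat \<Rightarrow> complex" where "vu i = (if i = 0 then 4 else if i < 12 then 1 else 0)"
definition vt :: "nat \<Rightarrow> nat \<Rightarrow> complex" where "vt j i = (if i < 12 then theta * of_int (golayG j i) else 0)"
definition ve :: "nat \<Rightarrow> nat \<Rightarrow> complex" where "ve k i = (if i = k then 3 else if i = 0 then -3 else 0)"
definition vw :: "nat \<Rightarrow> complex" where "vw i = (if i = 0 then 3 * theta else 0)"

lemma zero_leech: "(\<lambda>i. 0) \<in> leech"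
  by (rule lrep_leech[of _ 0 "\<lambda>i. 0" "\<lambda>i. 0" 0]) (simp add: lrep_def golay_zero)

lemma vu_leech: "vu \<in> leech"
  by (rule lrep_leech[of _ 1 "\<lambda>i. 0" "\<lambda>i. if i = 0 then 1 else 0" 0]) (auto simp add: lrep_def golay_zero vu_def)

lemma vt_leech: "j < 6 \<Longrightarrow> vt j \<in> leech"
  by (rule lrep_leech[of _ 0 "\<lambda>i. golayG j i" "\<lambda>i. 0" 0]) (auto simp add: lrep_def golay_row vt_def)

lemma ve_leech: "0 < k \<Longrightarrow> k < 12 \<Longrightarrow> ve k \<in> leech"
  by (rule lrep_leech[of _ 0 "\<lambda>i. 0" "\<lambda>i. if i = k then 1 else if i = 0 then -1 else 0" 0])
     (auto simp add: lrep_def golay_zero ve_def sum.If_cases)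

lemma veo_leech: "0 < k \<Longrightarrow> k < 12 \<Longrightarrow> (\<lambda>i. omega * ve k i) \<in> leech"
  by (rule lrep_leech[of _ 0 "\<lambda>i. 0" "\<lambda>i. omega * (if i = k then 1 else if i = 0 then -1 else 0)" 0])
     (auto simp add: lrep_def golay_zero ve_def sum.If_cases sum_distrib_left[symmetric])

lemma vw_leech: "vw \<in> leech"
  by (rule lrep_leech[of _ 0 "\<lambda>i. 0" "\<lambda>i. if i = 0 then theta else 0" 1])
     (auto simp add: lrep_def golay_zero vw_def)

lemma vwo_leech: "(\<lambda>i. omega * vw i) \<in> leech"
  by (rule lrep_leech[of _ 0 "\<lambda>i. 0" "\<lambda>i. if i = 0 then omega * theta else 0" omega])
     (auto simp add: lrep_def golay_zero vw_def)

lemma sum12_if0: "(\<Sum>i<(12::nat). if i = 0 then (a::complex) else b) = a + 11 * b"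
proof -
  have "{..<12::nat} = insert 0 {1..<12}" by auto
  then show ?thesis by simp
qed

lemma sum12_delta2: assumes "0 < k" "k < (12::nat)"
  shows "(\<Sum>i<12. (if i = k then (a::complex) else 0) + (if i = 0 then b else 0)) = a + b"
  using assms by (simp add: sum.distrib)

lemma vu_norm: "leech_norm vu = -9"
proof -
  have "cnj (vu i) * vu i = (if i = 0 then 16 else 1)" if "i < 12" for i
    using that by (simp add: vu_def)
  then have "(\<Sum>i<12. cnj (vu i) * vu i) = (\<Sum>i<(12::nat). if i = 0 then 16 else 1)"
    by (intro sum.cong) auto
  then show ?thesis unfolding leech_norm_def leech_form_def sum12_if0 by simp
qed

lemma vw_norm: "leech_norm vw = -9"
proof -
  have "cnj (vw i) * vw i = (if i = 0 then 27 else 0)" for i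
    by (simp add: vw_def cnj_theta algebra_simps theta_sq2)
  then have "(\<Sum>i<12. cnj (vw i) * vw i) = (\<Sum>i<(12::nat). (if i = 0 then 27 else 0))"
    by simp
  then show ?thesis unfolding leech_norm_def leech_form_def by simp
qed

lemma ve_norm: assumes "0 < k" "k < 12" shows "leech_norm (ve k) = -6"
proof -
  have "cnj (ve k i) * ve k i = (if i = k then 9 else 0) + (if i = 0 then 9 else 0)" for i
    using assms by (simp add: ve_def)
  then have "(\<Sum>i<12. cnj (ve k i) * ve k i) = 18"
    using sum12_delta2[OF assms, of 9 9] by simp
  then show ?thesis unfolding leech_norm_def leech_form_def by simp
qed

lemma vt_norm: assumes "j < 6" shows "leech_norm (vt j) = -6"
proof -
  have "cnj (vt j i) * vt j i = 3 * of_int ((golayG j i)^2)" if "i < 12" for i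
    using that by (simp add: vt_def cnj_theta theta_sq2 power2_eq_square algebra_simps)
  then have "(\<Sum>i<12. cnj (vt j i) * vt j i) = 3 * of_int (\<Sum>i<12. (golayG j i)^2)"
    by (simp add: sum_distrib_left)
  then show ?thesis unfolding leech_norm_def leech_form_def golay_rowsq[OF assms] by simp
qed

lemma steps: "step vu" "step vw" "step (\<lambda>i. omega * vw i)"
  "j < 6 \<Longrightarrow> step (vt j)" "0 < k \<Longrightarrow> k < 12 \<Longrightarrow> step (ve k)"
  "0 < k \<Longrightarrow> k < 12 \<Longrightarrow> step (\<lambda>i. omega * ve k i)"
  unfolding step_def
  by (simp_all add: vu_leech vw_leech vwo_leech vt_leech ve_leech veo_leech norm_omega vu_norm vw_norm ve_norm vt_norm)

lemma shift: assumes v: "valid l \<beta>" shows "Psi_adj\<^sup>*\<^sup>* (r_vec l \<beta>) (r_vec l (\<beta> + 1))"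
proof -
  have l: "l \<in> leech" using v unfolding valid_def by simp
  define \<gamma> where "\<gamma> = \<beta> + Im (leech_form l vw) / sqrt 3 - (-1) * (1/2)"
  have e1: "valid (\<lambda>i. l i + vw i) \<gamma> \<and> Psi_adj (r_vec l \<beta>) (r_vec (\<lambda>i. l i + vw i) \<gamma>)"
    unfolding \<gamma>_def by (rule edge[OF l vw_leech v]) (simp_all add: vw_norm)
  have lw: "(\<lambda>i. l i + vw i) \<in> leech" by (rule leech_add[OF l vw_leech])
  have e2: "valid (\<lambda>i. (l i + vw i) + - vw i) (\<gamma> + Im (leech_form (\<lambda>i. l i + vw i) (\<lambda>i. - vw i)) / sqrt 3 - (-1) * (1/2))
     \<and> Psi_adj (r_vec (\<lambda>i. l i + vw i) \<gamma>) (r_vec (\<lambda>i. (l i + vw i) + - vw i) (\<gamma> + Im (leech_form (\<lambda>i. l i + vw i) (\<lambda>i. - vw i)) / sqrt 3 - (-1) * (1/2)))"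
    by (rule edge[OF lw leech_neg[OF vw_leech]]) (use e1 in \<open>simp_all add: vw_norm norm_neg\<close>)
  have "Im (leech_form (\<lambda>i. l i + vw i) (\<lambda>i. - vw i)) = - Im (leech_form l vw)"
    unfolding form_neg_right form_add_left form_self by simp
  then have g2: "\<gamma> + Im (leech_form (\<lambda>i. l i + vw i) (\<lambda>i. - vw i)) / sqrt 3 - (-1) * (1/2) = \<beta> + 1"
    unfolding \<gamma>_def by simp
  have eq: "(\<lambda>i. (l i + vw i) + - vw i) = l" by simp
  from e1 e2 show ?thesis unfolding g2 eq by (meson rtranclp.rtrancl_into_rtrancl rtranclp.rtrancl_refl)
qed

lemma valid0: "valid (\<lambda>i. 0) \<beta> \<longleftrightarrow> (\<exists>k::int. \<beta> = of_int k - 1/2)"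
proof -
  have N0: "leech_norm (\<lambda>i. 0) = 0" unfolding leech_norm_def leech_form_def by simp
  show ?thesis
  proof
    assume "valid (\<lambda>i. 0) \<beta>"
    then obtain k :: int where "2 * \<beta> + 1 - 0 = 2 * of_int k" unfolding valid_def N0 by blast
    then show "\<exists>k::int. \<beta> = of_int k - 1/2" by (intro exI[of _ k]) simp
  next
    assume "\<exists>k::int. \<beta> = of_int k - 1/2"
    then obtain k :: int where k: "\<beta> = of_int k - 1/2" by blast
    show "valid (\<lambda>i. 0) \<beta>" unfolding valid_def N0
    proof (intro conjI zero_leech)
      show "\<exists>n::int. \<beta> = of_int n / 2" by (rule exI[of _ "2 * k - 1"]) (simp add: k field_simps)
      show "\<exists>k'::int. 2 * \<beta> + 1 - 0 = 2 * of_int k'" by (rule exI[of _ k]) (simp add: k field_simps)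
    qed
  qed
qed

lemma good0: "good (\<lambda>i. 0)"
proof -
  have "Psi_adj\<^sup>*\<^sup>* base (r_vec (\<lambda>i. 0) (of_int k - 1/2))" for k :: int
  proof (induction k rule: int_induct[of _ 1])
    case base then show ?case unfolding base_def by simp
  next
    case (step1 i)
    have "valid (\<lambda>i. 0) (of_int i - 1/2)" unfolding valid0 by blast
    from shift[OF this] have "Psi_adj\<^sup>*\<^sup>* (r_vec (\<lambda>i. 0) (of_int i - 1/2)) (r_vec (\<lambda>i. 0) (of_int (i + 1) - 1/2))"
      by (simp add: algebra_simps)
    with step1(2) show ?case by (rule rtranclp_trans)
  next
    case (step2 i)
    have "valid (\<lambda>i. 0) (of_int (i - 1) - 1/2)" unfolding valid0 by blast
    from shift[OF this] have "Psi_adj\<^sup>*\<^sup>* (r_vec (\<lambda>i. 0) (of_int (i - 1) - 1/2)) (r_vec (\<lambda>i. 0) (of_int i - 1/2))"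
      by (simp add: algebra_simps)
    then have "Psi_adj\<^sup>*\<^sup>* (r_vec (\<lambda>i. 0) (of_int i - 1/2)) (r_vec (\<lambda>i. 0) (of_int (i - 1) - 1/2))"
      by (rule R_sym)
    with step2(2) show ?case by (rule rtranclp_trans)
  qed
  then show ?thesis unfolding good_def valid0 using zero_leech by blast
qed

lemma leech_good: assumes l: "l \<in> leech" shows "good l"
proof -
  obtain m c z w where r: "lrep l m c z w" using leech_lrep[OF l] by blast
  from r have cw: "golay_codeword c" and zE: "\<forall>i<12. eisenstein (z i)" and wE: "eisenstein w"
    and S: "(\<Sum>i<12. z i) - of_int m = theta * w" and L: "\<forall>i<12. l i = of_int m + theta * of_int (c i) + 3 * z i"
    and Z: "\<forall>i\<ge>12. l i = 0" unfolding lrep_def by auto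
  obtain x where x: "\<forall>i<12. (3::int) dvd (c i - (\<Sum>j<6. x j * golayG j i))"
    using golay_dvd[OF cw] by blast
  define d where "d i = (c i - (\<Sum>j<6. x j * golayG j i)) div 3" for i
  have cd: "of_int (c i) = (\<Sum>j<6. of_int (x j) * of_int (golayG j i)) + 3 * (of_int (d i) :: complex)" if "i < 12" for i
  proof -
    have "c i = (\<Sum>j<6. x j * golayG j i) + 3 * d i" using x that unfolding d_def by auto
    then have "(of_int (c i) :: complex) = of_int ((\<Sum>j<6. x j * golayG j i) + 3 * d i)" by simp
    then show ?thesis by simp
  qed
  define z' where "z' i = z i - (if i = 0 then of_int m else 0) + theta * of_int (d i)" for i
  have z'E: "\<forall>i<12. eisenstein (z' i)" using zE unfolding z'_def by simp
  then have "\<forall>i. \<exists>ab::int\<times>int. i < 12 \<longrightarrow> z' i = of_int (fst ab) + of_int (snd ab) * omega"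
    unfolding eisenstein_def by auto
  then obtain ab :: "nat \<Rightarrow> int \<times> int" where ab: "\<forall>i<12. z' i = of_int (fst (ab i)) + of_int (snd (ab i)) * omega"
    by metis
  define a where "a i = fst (ab i)" for i
  define b where "b i = snd (ab i)" for i
  have zab: "z' i = of_int (a i) + of_int (b i) * omega" if "i < 12" for i using ab that unfolding a_def b_def by auto
  have Sz': "(\<Sum>i<12. z' i) = theta * (w + of_int (\<Sum>i<12. d i))"
  proof -
    have "(\<Sum>i<12. z' i) = (\<Sum>i<12. z i) - (\<Sum>i<(12::nat). if i = 0 then of_int m else 0) + theta * of_int (\<Sum>i<12. d i)"
      unfolding z'_def by (simp add: sum.distrib sum_subtractf sum_distrib_left)
    also have "(\<Sum>i<(12::nat). if i = 0 then of_int m else 0) = (of_int m :: complex)" by simp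
    finally show ?thesis using S by (simp add: algebra_simps)
  qed
  obtain p q :: int where pq: "w + of_int (\<Sum>i<12. d i) = of_int p + of_int q * omega"
    using eis_add[OF wE eis_int] unfolding eisenstein_def by blast
  define K where "K = {1..<(12::nat)}"
  have K: "finite K" "\<forall>k\<in>K. step (ve k)" "\<forall>k\<in>K. step (\<lambda>i. omega * ve k i)"
    unfolding K_def using steps(5,6) by auto
  have T: "\<forall>j\<in>{..<6}. step (vt j)" using steps(4) by auto
  define f1 where "f1 i = 0 + of_int m * vu i" for i
  define f2 where "f2 i = f1 i + (\<Sum>j\<in>{..<6}. of_int (x j) * vt j i)" for i
  define f3 where "f3 i = f2 i + (\<Sum>k\<in>K. of_int (a k) * ve k i)" for i
  define f4 where "f4 i = f3 i + (\<Sum>k\<in>K. of_int (b k) * (omega * ve k i))" for i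
  define f5 where "f5 i = f4 i + of_int p * vw i" for i
  define f6 where "f6 i = f5 i + of_int q * (omega * vw i)" for i
  have "good f1" unfolding f1_def by (rule good_mult[OF good0 steps(1)])
  then have "good f2" unfolding f2_def by (rule good_sum[OF _ _ T, simplified])
  then have "good f3" unfolding f3_def by (rule good_sum[OF K(1) _ K(2)])
  then have "good f4" unfolding f4_def by (rule good_sum[OF K(1) _ K(3)])
  then have "good f5" unfolding f5_def by (rule good_mult[OF _ steps(2)])
  then have g6: "good f6" unfolding f6_def by (rule good_mult[OF _ steps(3)])
  have H: "(\<Sum>k\<in>K. of_int (a k) * ve k i) + (\<Sum>k\<in>K. of_int (b k) * (omega * ve k i))
      + of_int p * vw i + of_int q * (omega * vw i) = 3 * z' i" if i: "i < 12" for i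
  proof -
    have "(\<Sum>k\<in>K. of_int (a k) * ve k i) + (\<Sum>k\<in>K. of_int (b k) * (omega * ve k i))
        = (\<Sum>k\<in>K. z' k * ve k i)"
      unfolding sum.distrib[symmetric] by (rule sum.cong) (auto simp: K_def zab algebra_simps)
    moreover have "of_int p * vw i + of_int q * (omega * vw i) = (of_int p + of_int q * omega) * vw i"
      by (simp add: algebra_simps)
    ultimately have e: "(\<Sum>k\<in>K. of_int (a k) * ve k i) + (\<Sum>k\<in>K. of_int (b k) * (omega * ve k i))
      + of_int p * vw i + of_int q * (omega * vw i) = (\<Sum>k\<in>K. z' k * ve k i) + (of_int p + of_int q * omega) * vw i"
      by simp
    show ?thesis
    proof (cases "i = 0")
      case True
      have "(\<Sum>k\<in>K. z' k * ve k i) = - 3 * (\<Sum>k\<in>K. z' k)"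
        unfolding sum_distrib_left by (rule sum.cong) (auto simp: K_def ve_def True)
      moreover have "{..<12::nat} = insert 0 K" unfolding K_def by auto
      then have "(\<Sum>k<12. z' k) = z' 0 + (\<Sum>k\<in>K. z' k)" unfolding K_def by simp
      ultimately have s1: "(\<Sum>k\<in>K. z' k * ve k i) = - 3 * ((\<Sum>k<12. z' k) - z' 0)" by simp
      have s2: "(of_int p + of_int q * omega) * vw i = 3 * (\<Sum>k<12. z' k)"
        unfolding Sz' pq[symmetric] using True by (simp add: vw_def algebra_simps)
      show ?thesis unfolding e s1 s2 by (simp add: True algebra_simps)
    next
      case False
      have "(\<Sum>k\<in>K. z' k * ve k i) = (\<Sum>k\<in>K. if k = i then 3 * z' k else 0)"
        by (rule sum.cong) (auto simp: ve_def False)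
      also have "\<dots> = 3 * z' i" using i False unfolding K_def by simp
      finally show ?thesis unfolding e using False by (simp add: vw_def)
    qed
  qed
  have "f6 = l"
  proof
    fix i
    show "f6 i = l i"
    proof (cases "i < 12")
      case True
      have "f6 i = of_int m * vu i + (\<Sum>j<6. of_int (x j) * vt j i) + 3 * z' i"
        using H[OF True] unfolding f6_def f5_def f4_def f3_def f2_def f1_def by (simp add: algebra_simps)
      also have "(\<Sum>j<6. of_int (x j) * vt j i) = theta * (\<Sum>j<6. of_int (x j) * of_int (golayG j i))"
        unfolding sum_distrib_left by (rule sum.cong) (use True in \<open>auto simp: vt_def\<close>)
      finally show ?thesis using L True cd[OF True] unfolding z'_def
        by (cases "i = 0") (simp_all add: vu_def algebra_simps)
    next
      case False
      have "ve k i = 0" if "k \<in> K" for k using that False unfolding K_def ve_def by auto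
      then show ?thesis using False Z unfolding f6_def f5_def f4_def f3_def f2_def f1_def
        by (simp add: vu_def vt_def vw_def)
    qed
  qed
  with g6 show ?thesis by simp
qed

theorem mainTheorem4:
  shows "(\<forall>r\<in>Psi. r \<in> Lset \<and> L_form r r = -3) \<and>
         (\<forall>a\<in>Psi. \<forall>b\<in>Psi. Psi_adj\<^sup>*\<^sup>* a b)"
proof
  show "\<forall>r\<in>Psi. r \<in> Lset \<and> L_form r r = -3"
  proof
    fix r assume "r \<in> Psi"
    then obtain l \<beta> where "r = r_vec l \<beta>" "valid l \<beta>" using Psi_valid by blast
    then show "r \<in> Lset \<and> L_form r r = -3" using part1 by simp
  qed
  have B: "Psi_adj\<^sup>*\<^sup>* base r" if rP: "r \<in> Psi" for r
  proof -
    obtain l \<beta> where r: "r = r_vec l \<beta>" and v: "valid l \<beta>" using Psi_valid[OF rP] by blast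
    then have "good l" using leech_good unfolding valid_def by blast
    then show ?thesis using r v unfolding good_def by blast
  qed
  show "\<forall>a\<in>Psi. \<forall>b\<in>Psi. Psi_adj\<^sup>*\<^sup>* a b"
  proof (intro ballI)
    fix a b assume "a \<in> Psi" "b \<in> Psi"
    then have "Psi_adj\<^sup>*\<^sup>* a base" "Psi_adj\<^sup>*\<^sup>* base b" using B R_sym by blast+
    then show "Psi_adj\<^sup>*\<^sup>* a b" by (rule rtranclp_trans)
  qed
qed

end
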